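(* The function $\Phi(\alpha,\beta)=\left(\frac{1+\sqrt{\alpha\beta}}{\sqrt{\alpha}+\sqrt{\beta}}\right)^2$ is nondecreasing in each variable on $[1,\infty)^2$. Consequently, if $A,B$ are $2\times2$ matrices with strictly positive entries, $\alpha,\beta\ge1$, $R(A)\le\alpha$ and $R(B)\le\beta$, then $R(AB)\le\Phi(\alpha,\beta)$.
   Context: For a $2\times2$ matrix $A=(a_{ij})$ with strictly positive entries, $F(A)=\frac{a_{11}a_{22}}{a_{12}a_{21}}$ and the distortion is $R(A)=\max\{F(A),1/F(A)\}$. *)

theory Defs
  imports "HOL-Analysis.Analysis"
begin

definition pos_matrix :: "real^2^2 \<Rightarrow> bool" where
  "pos_matrix A \<longleftrightarrow> (\<forall>i j. A $ i $ j > 0)"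

definition crossF :: "real^2^2 \<Rightarrow> real" where
  "crossF A = (A $ 1 $ 1 * A $ 2 $ 2) / (A $ 1 $ 2 * A $ 2 $ 1)"

definition distortion :: "real^2^2 \<Rightarrow> real" where
  "distortion A = max (crossF A) (1 / crossF A)"

definition Phi :: "real \<Rightarrow> real \<Rightarrow> real" where
  "Phi \<alpha> \<beta> = ((1 + sqrt (\<alpha> * \<beta>)) / (sqrt \<alpha> + sqrt \<beta>))\<^sup>2"

end

theory Submission
  imports Defs
begin

lemma g_mono1:
  fixes a a' b :: real
  assumes "1 \<le> b" "0 < a" "a \<le> a'"
  shows "(1+a*b)/(a+b) \<le> (1+a'*b)/(a'+b)"
proof -
  have "(1+a*b)*(a'+b) \<le> (1+a'*b)*(a+b)"
  proof -
    have "1*1 \<le> b*b" using assms by (intro mult_mono) auto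
    then have "(a'-a) * 1 \<le> (a'-a)*(b*b)"
      using assms by (intro mult_left_mono) auto
    then show ?thesis by (simp add: algebra_simps)
  qed
  then show ?thesis using assms by (simp add: divide_simps)
qed

lemma g_bound:
  fixes x y ua ub :: real
  assumes "1 \<le> x" "x \<le> ua" "1 \<le> y" "y \<le> ub"
  shows "((1+x*y)/(x+y))^2 \<le> ((1+ua*ub)/(ua+ub))^2"
proof -
  have "(1+x*y)/(x+y) \<le> (1+ua*y)/(ua+y)"
    using g_mono1[of y x ua] assms by simp
  also have "\<dots> = (1+y*ua)/(y+ua)" by (simp add: algebra_simps)
  also have "\<dots> \<le> (1+ub*ua)/(ub+ua)"
    using g_mono1[of ua y ub] assms by simp
  also have "\<dots> = (1+ua*ub)/(ua+ub)" by (simp add: algebra_simps)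
  finally have "(1+x*y)/(x+y) \<le> (1+ua*ub)/(ua+ub)" .
  moreover have "0 \<le> (1+x*y)/(x+y)" using assms by simp
  ultimately show ?thesis by (rule power_mono)
qed

lemma Phi_alt:
  assumes "0 \<le> a" "0 \<le> b"
  shows "Phi a b = ((1 + sqrt a * sqrt b)/(sqrt a + sqrt b))^2"
  unfolding Phi_def using assms by (simp add: real_sqrt_mult)

lemma Phi_ge1:
  assumes "1 \<le> a" "1 \<le> b"
  shows "1 \<le> Phi a b"
proof -
  have "((1+1*1)/(1+1::real))^2 \<le> ((1 + sqrt a * sqrt b)/(sqrt a + sqrt b))^2"
    using assms by (intro g_bound) auto
  then show ?thesis using assms by (simp add: Phi_alt)
qed

lemma core:
  fixes X Y P Q K \<alpha> \<beta> :: real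
  assumes pos: "X > 0" "Y > 0" "P > 0" "Q > 0"
    and K: "K \<ge> 2 * sqrt (X*Y*P*Q)"
    and ab: "X/Y \<le> \<alpha>" "Y/X \<le> \<alpha>" "P/Q \<le> \<beta>" "Q/P \<le> \<beta>" "1 \<le> \<alpha>" "1 \<le> \<beta>"
  shows "(K+X*P+Y*Q)/(K+X*Q+Y*P) \<le> Phi \<alpha> \<beta>"
proof (cases "(X-Y)*(P-Q) \<le> 0")
  case True
  have "0 \<le> 2 * sqrt (X*Y*P*Q)" using pos by simp
  then have Kp: "K \<ge> 0" using K by linarith
  have dpos: "K+X*Q+Y*P > 0" using pos Kp by (simp add: add_pos_pos add_nonneg_pos)
  have "(K+X*Q+Y*P) - (K+X*P+Y*Q) = -((X-Y)*(P-Q))" by (simp add: algebra_simps)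
  then have "K+X*P+Y*Q \<le> K+X*Q+Y*P" using True by linarith
  then have "(K+X*P+Y*Q)/(K+X*Q+Y*P) \<le> 1" using dpos by simp
  also have "\<dots> \<le> Phi \<alpha> \<beta>" using Phi_ge1 ab by auto
  finally show ?thesis .
next
  case False
  define m where "m = sqrt (X*Y*P*Q)"
  define x where "x = sqrt (X/Y)"
  define y where "y = sqrt (P/Q)"
  have xp: "x > 0" "y > 0" using pos by (auto simp: x_def y_def)
  have x2: "x^2 = X/Y" "y^2 = P/Q" using pos by (auto simp: x_def y_def)
  have mxy: "m = Y*Q*x*y"
  proof -
    have "Y*Q*x*y = sqrt ((Y*Q)^2) * sqrt (X/Y) * sqrt (P/Q)"
      using pos by (simp add: x_def y_def)
    also have "\<dots> = sqrt ((Y*Q)^2 * (X/Y) * (P/Q))" by (simp only: real_sqrt_mult)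
    also have "(Y*Q)^2 * (X/Y) * (P/Q) = X*Y*P*Q" using pos by (simp add: field_simps power2_eq_square)
    finally show ?thesis by (simp add: m_def)
  qed
  have mp: "m > 0" using pos by (simp add: m_def)
  have D0: "2*m + X*Q + Y*P > 0" using pos mp by (simp add: add_pos_pos)
  have Km: "K \<ge> 2*m" using K m_def by simp
  have E: "(X-Y)*(P-Q) \<ge> 0" using False by simp
  have step1: "(K+X*P+Y*Q)/(K+X*Q+Y*P) \<le> (2*m+X*P+Y*Q)/(2*m+X*Q+Y*P)"
  proof -
    have DK: "K+X*Q+Y*P > 0" using D0 Km by simp
    have eq1: "(K+X*P+Y*Q)/(K+X*Q+Y*P) = 1 + (X-Y)*(P-Q)/(K+X*Q+Y*P)"
      using DK by (simp add: field_simps)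
    have eq2: "(2*m+X*P+Y*Q)/(2*m+X*Q+Y*P) = 1 + (X-Y)*(P-Q)/(2*m+X*Q+Y*P)"
      using D0 by (simp add: field_simps)
    have "(X-Y)*(P-Q)/(K+X*Q+Y*P) \<le> (X-Y)*(P-Q)/(2*m+X*Q+Y*P)"
      using E D0 Km by (intro divide_left_mono) auto
    then show ?thesis using eq1 eq2 by simp
  qed
  have step2: "(2*m+X*P+Y*Q)/(2*m+X*Q+Y*P) = ((1+x*y)/(x+y))^2"
  proof -
    have yx: "Y*x^2 = X" "Q*y^2 = P" using x2 pos by simp_all
    have n: "2*m+X*P+Y*Q = Y*Q*(1+x*y)^2"
    proof -
      have "Y*Q*(1+x*y)^2 = Y*Q + 2*(Y*Q*x*y) + (Y*x^2)*(Q*y^2)"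
        by (simp add: power2_eq_square algebra_simps)
      then show ?thesis using yx mxy by simp
    qed
    have d: "2*m+X*Q+Y*P = Y*Q*(x+y)^2"
    proof -
      have "Y*Q*(x+y)^2 = Q*(Y*x^2) + 2*(Y*Q*x*y) + Y*(Q*y^2)"
        by (simp add: power2_eq_square algebra_simps)
      then show ?thesis using yx mxy by simp
    qed
    show ?thesis using n d pos by (simp add: power_divide)
  qed
  have PhiA: "Phi \<alpha> \<beta> = ((1 + sqrt \<alpha> * sqrt \<beta>)/(sqrt \<alpha> + sqrt \<beta>))^2"
    using ab by (intro Phi_alt) auto
  have step3: "((1+x*y)/(x+y))^2 \<le> Phi \<alpha> \<beta>"
  proof (cases "X \<ge> Y")
    case True
    have "P \<ge> Q"
    proof (rule ccontr)
      assume "\<not> P \<ge> Q"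
      then have "(X-Y)*(P-Q) \<le> 0" using True by (intro mult_nonneg_nonpos) auto
      then show False using False by simp
    qed
    have r1: "1 \<le> X/Y" "1 \<le> P/Q" using True \<open>P \<ge> Q\<close> pos by simp_all
    have "1 \<le> x" unfolding x_def using r1 by simp
    moreover have "x \<le> sqrt \<alpha>" unfolding x_def using ab by (simp add: real_sqrt_le_mono)
    moreover have "1 \<le> y" unfolding y_def using r1 by simp
    moreover have "y \<le> sqrt \<beta>" unfolding y_def using ab by (simp add: real_sqrt_le_mono)
    ultimately show ?thesis unfolding PhiA by (rule g_bound)
  next
    case c: False
    have "P \<le> Q"
    proof (rule ccontr)
      assume "\<not> P \<le> Q"
      then have "(X-Y)*(P-Q) \<le> 0" using c by (intro mult_nonpos_nonneg) auto
      then show False using False by simp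
    qed
    have r1: "1 \<le> Y/X" "1 \<le> Q/P" using c \<open>P \<le> Q\<close> pos by simp_all
    have ix: "1/x = sqrt (Y/X)" "1/y = sqrt (Q/P)" by (simp_all add: x_def y_def real_sqrt_divide)
    have "1 \<le> 1/x" unfolding ix using r1 by simp
    moreover have "1/x \<le> sqrt \<alpha>" unfolding ix using ab by (simp add: real_sqrt_le_mono)
    moreover have "1 \<le> 1/y" unfolding ix using r1 by simp
    moreover have "1/y \<le> sqrt \<beta>" unfolding ix using ab by (simp add: real_sqrt_le_mono)
    ultimately have "((1+(1/x)*(1/y))/((1/x)+(1/y)))^2 \<le> Phi \<alpha> \<beta>"
      unfolding PhiA by (rule g_bound)
    moreover have "(1+(1/x)*(1/y))/((1/x)+(1/y)) = (1+x*y)/(x+y)"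
    proof -
      have e1: "1+(1/x)*(1/y) = (1+x*y)/(x*y)" using xp by (simp add: field_simps)
      have e2: "1/x+1/y = (x+y)/(x*y)" using xp by (simp add: field_simps)
      show ?thesis unfolding e1 e2 using xp by simp
    qed
    ultimately show ?thesis by simp
  qed
  show ?thesis using step1 step2 step3 by simp
qed

lemma Phi_mono:
  assumes "1 \<le> a" "a \<le> a'" "1 \<le> b" "b \<le> b'"
  shows "Phi a b \<le> Phi a' b'"
proof -
  have "((1 + sqrt a * sqrt b)/(sqrt a + sqrt b))^2 \<le> ((1 + sqrt a' * sqrt b')/(sqrt a' + sqrt b'))^2"
    using assms by (intro g_bound) auto
  then show ?thesis using assms by (simp add: Phi_alt)
qed

lemma mat_part:
  fixes A B :: "real^2^2" and \<alpha> \<beta> :: real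
  assumes pA: "pos_matrix A" and pB: "pos_matrix B" and ab: "1 \<le> \<alpha>" "1 \<le> \<beta>"
    and dA: "distortion A \<le> \<alpha>" and dB: "distortion B \<le> \<beta>"
  shows "distortion (A ** B) \<le> Phi \<alpha> \<beta>"
proof -
  define a where "a = A$1$1"
  define b where "b = A$1$2"
  define c where "c = A$2$1"
  define d where "d = A$2$2"
  define e where "e = B$1$1"
  define f where "f = B$1$2"
  define g where "g = B$2$1"
  define h where "h = B$2$2"
  have pos: "a > 0" "b > 0" "c > 0" "d > 0" "e > 0" "f > 0" "g > 0" "h > 0"
    using pA pB unfolding pos_matrix_def a_def b_def c_def d_def e_def f_def g_def h_def by auto
  define X where "X = a*d"
  define Y where "Y = b*c"
  define P where "P = e*h"
  define Q where "Q = f*g"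
  define K where "K = a*c*e*f + b*d*g*h"
  have XYPQ: "X > 0" "Y > 0" "P > 0" "Q > 0" using pos by (simp_all add: X_def Y_def P_def Q_def)
  have cA: "crossF A = X/Y" by (simp add: crossF_def X_def Y_def a_def b_def c_def d_def)
  have cB: "crossF B = P/Q" by (simp add: crossF_def P_def Q_def e_def f_def g_def h_def)
  have A1: "X/Y \<le> \<alpha>" "Y/X \<le> \<alpha>" using dA unfolding distortion_def cA by auto
  have B1: "P/Q \<le> \<beta>" "Q/P \<le> \<beta>" using dB unfolding distortion_def cB by auto
  have Kge: "K \<ge> 2 * sqrt (X*Y*P*Q)"
  proof -
    have "sqrt ((a*c*e*f) * (b*d*g*h)) \<le> ((a*c*e*f) + (b*d*g*h))/2"
      using pos by (intro arith_geo_mean_sqrt) auto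
    moreover have "(a*c*e*f) * (b*d*g*h) = X*Y*P*Q"
      by (simp add: X_def Y_def P_def Q_def algebra_simps)
    ultimately show ?thesis by (simp add: K_def)
  qed
  have Kge': "K \<ge> 2 * sqrt (X*Y*Q*P)" using Kge by (simp add: algebra_simps)
  have cAB: "crossF (A ** B) = (K+X*P+Y*Q)/(K+X*Q+Y*P)"
  proof -
    have "crossF (A ** B) = ((a*e+b*g)*(c*f+d*h))/((a*f+b*h)*(c*e+d*g))"
      by (simp add: crossF_def matrix_matrix_mult_def sum_2 a_def b_def c_def d_def e_def f_def g_def h_def)
    also have "(a*e+b*g)*(c*f+d*h) = K+X*P+Y*Q"
      by (simp add: K_def X_def Y_def P_def Q_def algebra_simps)
    also have "(a*f+b*h)*(c*e+d*g) = K+X*Q+Y*P"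
      by (simp add: K_def X_def Y_def P_def Q_def algebra_simps)
    finally show ?thesis .
  qed
  have i1: "(K+X*P+Y*Q)/(K+X*Q+Y*P) \<le> Phi \<alpha> \<beta>"
    using XYPQ Kge A1 B1 ab by (intro core) auto
  have i2: "(K+X*Q+Y*P)/(K+X*P+Y*Q) \<le> Phi \<alpha> \<beta>"
    using XYPQ Kge' A1 B1 ab by (intro core) auto
  show ?thesis unfolding distortion_def cAB using i1 i2 by simp
qed

theorem mainTheorem2:
  shows "(\<forall>\<beta>\<ge>1. mono_on {1..} (\<lambda>\<alpha>. Phi \<alpha> \<beta>))
       \<and> (\<forall>\<alpha>\<ge>1. mono_on {1..} (\<lambda>\<beta>. Phi \<alpha> \<beta>))
       \<and> (\<forall>(A::real^2^2) (B::real^2^2) \<alpha> \<beta>.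
            pos_matrix A \<longrightarrow> pos_matrix B \<longrightarrow> \<alpha> \<ge> 1 \<longrightarrow> \<beta> \<ge> 1 \<longrightarrow>
            distortion A \<le> \<alpha> \<longrightarrow> distortion B \<le> \<beta> \<longrightarrow>
            distortion (A ** B) \<le> Phi \<alpha> \<beta>)"
proof (intro conjI allI impI)
  fix \<beta> :: real assume "1 \<le> \<beta>"
  then show "mono_on {1..} (\<lambda>\<alpha>. Phi \<alpha> \<beta>)"
    by (intro mono_onI) (auto intro: Phi_mono)
next
  fix \<alpha> :: real assume "1 \<le> \<alpha>"
  then show "mono_on {1..} (\<lambda>\<beta>. Phi \<alpha> \<beta>)"
    by (intro mono_onI) (auto intro: Phi_mono)
next
  fix A B :: "real^2^2" and \<alpha> \<beta> :: real
  assume "pos_matrix A" "pos_matrix B" "1 \<le> \<alpha>" "1 \<le> \<beta>" "distortion A \<le> \<alpha>" "distortion B \<le> \<beta>"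
  then show "distortion (A ** B) \<le> Phi \<alpha> \<beta>" by (rule mat_part)
qed

end
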